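(* Consider the optimization problem $\mathbf{P}_{\rm SICD}$ over the variables $\boldsymbol{\tau}_0=(\tau_{0,t})_{t=1}^T$ and $\mathbf{E}=(E_{i,t})_{1\le i\le K,\,1\le t\le T}$: maximize $\displaystyle\sum_{t=1}^{T}\sum_{i=1}^{K}(1-\tau_{0,t})\log_2(1+x_{i,t})$, where $x_{i,t}=\dfrac{g_{i,t}E_{i,t}}{\sigma^2(1-\tau_{0,t})+\sum_{j=i+1}^{K}g_{j,t}E_{j,t}}$ (empty sums are $0$), subject to (i) $\sum_{n=1}^{t}E_{i,n}\le\sum_{n=1}^{t}\gamma_{i,n}\tau_{0,n}$ for all $i,t$; (ii) $x_{i,t}\ge S_i^{\rm th}$ for all $i,t$, understood in the form $g_{i,t}E_{i,t}\ge S_i^{\rm th}\big(\sigma^2(1-\tau_{0,t})+\sum_{j=i+1}^{K}g_{j,t}E_{j,t}\big)$; (iii) $0\le\tau_{0,t}\le1$ for all $t$; (iv) $E_{i,t}\ge0$ for all $i,t$. Then $\mathbf{P}_{\rm SICD}$ is a convex optimization problem: its objective is a concave function of $(\boldsymbol{\tau}_0,\mathbf{E})$ and its feasible set is convex.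
   Context: There are $K$ users and a horizon of $T$ time slots of unit length. In slot $t$, a fraction $\tau_{0,t}$ is used for downlink wireless energy transfer and the remaining $1-\tau_{0,t}$ for simultaneous uplink transmission. $g_{i,t}>0$ is the uplink channel power gain of user $i$ in slot $t$, $\sigma^2>0$ the noise power, $\gamma_{i,t}=\eta_i h_{i,t}P_B>0$ the harvested power of user $i$ in slot $t$ (harvested energy $\gamma_{i,t}\tau_{0,t}$), $E_{i,t}$ the energy consumed by user $i$ in slot $t$, and $S_i^{\rm th}$ given decodability thresholds. $x_{i,t}$ is the SINR of user $i$ under successive interference cancellation in the fixed decoding order $1,\dots,K$. For $\tau_{0,t}=1$ the slot-$t$ term of the objective is taken to be $0$ (its limiting value). *)

theory Defs
  imports "HOL-Analysis.Analysis"
begin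

text \<open>Decision variables: tau0 :: nat => real (slot t = 1..T) and
  E :: nat => nat => real (E i t, user i = 1..K, slot t = 1..T).\<close>

type_synonym decision = "(nat \<Rightarrow> real) \<times> (nat \<Rightarrow> nat \<Rightarrow> real)"

definition mix :: "real \<Rightarrow> decision \<Rightarrow> decision \<Rightarrow> decision" where
  "mix \<theta> u v =
     ((\<lambda>t. \<theta> * fst u t + (1 - \<theta>) * fst v t),
      (\<lambda>i t. \<theta> * snd u i t + (1 - \<theta>) * snd v i t))"

definition convex_dec :: "decision set \<Rightarrow> bool" where
  "convex_dec S \<longleftrightarrow> (\<forall>u\<in>S. \<forall>v\<in>S. \<forall>\<theta>::real. 0 \<le> \<theta> \<and> \<theta> \<le> 1 \<longrightarrow> mix \<theta> u v \<in> S)"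

definition concave_dec :: "decision set \<Rightarrow> (decision \<Rightarrow> real) \<Rightarrow> bool" where
  "concave_dec S f \<longleftrightarrow> (\<forall>u\<in>S. \<forall>v\<in>S. \<forall>\<theta>::real. 0 \<le> \<theta> \<and> \<theta> \<le> 1 \<longrightarrow>
      \<theta> * f u + (1 - \<theta>) * f v \<le> f (mix \<theta> u v))"

definition interf :: "nat \<Rightarrow> (nat \<Rightarrow> nat \<Rightarrow> real) \<Rightarrow> real \<Rightarrow> decision \<Rightarrow> nat \<Rightarrow> nat \<Rightarrow> real" where
  "interf K g \<sigma>2 d i t = \<sigma>2 * (1 - fst d t) + (\<Sum>j\<in>{i+1..K}. g j t * snd d j t)"

definition sinr :: "nat \<Rightarrow> (nat \<Rightarrow> nat \<Rightarrow> real) \<Rightarrow> real \<Rightarrow> decision \<Rightarrow> nat \<Rightarrow> nat \<Rightarrow> real" where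
  "sinr K g \<sigma>2 d i t = g i t * snd d i t / interf K g \<sigma>2 d i t"

definition slot_term :: "nat \<Rightarrow> (nat \<Rightarrow> nat \<Rightarrow> real) \<Rightarrow> real \<Rightarrow> decision \<Rightarrow> nat \<Rightarrow> real" where
  "slot_term K g \<sigma>2 d t =
     (if fst d t = 1 then 0
      else (\<Sum>i=1..K. (1 - fst d t) * log 2 (1 + sinr K g \<sigma>2 d i t)))"

definition objective :: "nat \<Rightarrow> nat \<Rightarrow> (nat \<Rightarrow> nat \<Rightarrow> real) \<Rightarrow> real \<Rightarrow> decision \<Rightarrow> real" where
  "objective K T g \<sigma>2 d = (\<Sum>t=1..T. slot_term K g \<sigma>2 d t)"

definition box_set :: "nat \<Rightarrow> nat \<Rightarrow> decision set" where
  "box_set K T = {d. (\<forall>t\<in>{1..T}. 0 \<le> fst d t \<and> fst d t \<le> 1) \<and>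
                     (\<forall>i\<in>{1..K}. \<forall>t\<in>{1..T}. 0 \<le> snd d i t)}"

definition feasible_set ::
  "nat \<Rightarrow> nat \<Rightarrow> (nat \<Rightarrow> nat \<Rightarrow> real) \<Rightarrow> real \<Rightarrow> (nat \<Rightarrow> nat \<Rightarrow> real) \<Rightarrow> (nat \<Rightarrow> real) \<Rightarrow> decision set" where
  "feasible_set K T g \<sigma>2 \<gamma> S = {d.
     (\<forall>i\<in>{1..K}. \<forall>t\<in>{1..T}. (\<Sum>n=1..t. snd d i n) \<le> (\<Sum>n=1..t. \<gamma> i n * fst d n)) \<and>
     (\<forall>i\<in>{1..K}. \<forall>t\<in>{1..T}. g i t * snd d i t \<ge> S i * interf K g \<sigma>2 d i t) \<and>
     (\<forall>t\<in>{1..T}. 0 \<le> fst d t \<and> fst d t \<le> 1) \<and>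
     (\<forall>i\<in>{1..K}. \<forall>t\<in>{1..T}. 0 \<le> snd d i t)}"

end

theory Submission
  imports Defs
begin

definition phi :: "real \<Rightarrow> real \<Rightarrow> real \<Rightarrow> real" where
  "phi c s a = (if s = 0 then 0 else s * log 2 (1 + a / (c * s)))"

lemma phi_scale:
  assumes "c > 0" "s > 0" "k > 0"
  shows "phi c (k * s) (k * a) = k * phi c s a"
  using assms by (simp add: phi_def)

lemma phi_mono:
  assumes "c > 0" "s > 0" "0 \<le> a" "a \<le> b"
  shows "phi c s a \<le> phi c s b"
proof -
  have "1 + a / (c * s) \<le> 1 + b / (c * s)"
    using assms by (simp add: divide_right_mono)
  moreover have "0 < 1 + a / (c * s)" using assms
    by (smt (verit) divide_nonneg_pos mult_pos_pos)
  ultimately have "log 2 (1 + a / (c * s)) \<le> log 2 (1 + b / (c * s))"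
    by simp
  thus ?thesis using assms by (simp add: phi_def)
qed

lemma phi_concave:
  assumes c: "c > 0" and s1: "s1 \<ge> 0" and s2: "s2 \<ge> 0" and a1: "a1 \<ge> 0" and a2: "a2 \<ge> 0"
    and th: "0 \<le> \<theta>" "\<theta> \<le> 1"
  shows "\<theta> * phi c s1 a1 + (1 - \<theta>) * phi c s2 a2
         \<le> phi c (\<theta> * s1 + (1 - \<theta>) * s2) (\<theta> * a1 + (1 - \<theta>) * a2)"
proof (cases "\<theta> = 0 \<or> \<theta> = 1")
  case True
  then show ?thesis by auto
next
  case False
  hence t0: "0 < \<theta>" and t1: "\<theta> < 1" using th by auto
  show ?thesis
  proof (cases "s1 = 0")
    case z1: True
    show ?thesis
    proof (cases "s2 = 0")
      case True
      with z1 show ?thesis by (simp add: phi_def)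
    next
      case False
      hence s2p: "s2 > 0" using s2 by simp
      have "\<theta> * phi c s1 a1 + (1 - \<theta>) * phi c s2 a2 = phi c ((1-\<theta>) * s2) ((1-\<theta>) * a2)"
        using z1 phi_scale[OF c s2p, of "1-\<theta>" a2] t1 by (simp add: phi_def)
      also have "\<dots> \<le> phi c ((1-\<theta>) * s2) (\<theta> * a1 + (1 - \<theta>) * a2)"
        using t0 t1 s2p a1 a2 c by (intro phi_mono) auto
      finally show ?thesis using z1 by simp
    qed
  next
    case False
    hence s1p: "s1 > 0" using s1 by simp
    show ?thesis
    proof (cases "s2 = 0")
      case z2: True
      have "\<theta> * phi c s1 a1 + (1 - \<theta>) * phi c s2 a2 = phi c (\<theta> * s1) (\<theta> * a1)"
        using z2 phi_scale[OF c s1p, of "\<theta>" a1] t0 by (simp add: phi_def)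
      also have "\<dots> \<le> phi c (\<theta> * s1) (\<theta> * a1 + (1 - \<theta>) * a2)"
        using t0 t1 s1p a1 a2 c by (intro phi_mono) auto
      finally show ?thesis using z2 by simp
    next
      case False
      hence s2p: "s2 > 0" using s2 by simp
      define s where "s = \<theta> * s1 + (1 - \<theta>) * s2"
      have sp: "s > 0" unfolding s_def using t0 t1 s1p s2p
        by (smt (verit) mult_pos_pos)
      define \<mu> where "\<mu> = \<theta> * s1 / s"
      have mu1: "1 - \<mu> = (1 - \<theta>) * s2 / s" unfolding \<mu>_def s_def using sp s_def
        by (simp add: field_simps)
      have mu0: "\<mu> \<ge> 0" "1 - \<mu> \<ge> 0" using mu1 t0 t1 s1p s2p sp unfolding \<mu>_def by auto
      define y1 where "y1 = 1 + a1 / (c * s1)"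
      define y2 where "y2 = 1 + a2 / (c * s2)"
      have y1p: "y1 > 0" unfolding y1_def using a1 c s1p
        by (smt (verit) divide_nonneg_pos mult_pos_pos)
      have y2p: "y2 > 0" unfolding y2_def using a2 c s2p
        by (smt (verit) divide_nonneg_pos mult_pos_pos)
      have conc: "\<mu> * log 2 y1 + (1 - \<mu>) * log 2 y2 \<le> log 2 (\<mu> * y1 + (1 - \<mu>) * y2)"
        using log_concave[of 2] y1p y2p mu0 unfolding concave_on_iff by force
      have comb: "\<mu> * y1 + (1 - \<mu>) * y2 = 1 + (\<theta> * a1 + (1 - \<theta>) * a2) / (c * s)"
      proof -
        have "\<mu> * y1 + (1 - \<mu>) * y2 = (\<mu> + (1 - \<mu>)) + \<theta> * s1 / s * (a1 / (c * s1))
              + (1 - \<theta>) * s2 / s * (a2 / (c * s2))"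
          unfolding y1_def y2_def mu1 using s1p s2p sp c by (simp add: \<mu>_def field_simps)
        also have "\<dots> = 1 + (\<theta> * a1 + (1 - \<theta>) * a2) / (c * s)"
          using s1p s2p sp c by (simp add: field_simps)
        finally show ?thesis .
      qed
      have lhs: "\<theta> * phi c s1 a1 + (1 - \<theta>) * phi c s2 a2
            = s * (\<mu> * log 2 y1 + (1 - \<mu>) * log 2 y2)"
      proof -
        have e1: "s * \<mu> = \<theta> * s1" unfolding \<mu>_def using sp by simp
        have e2: "s * (1 - \<mu>) = (1 - \<theta>) * s2" unfolding mu1 using sp by simp
        show ?thesis unfolding phi_def y1_def y2_def using s1p s2p
          by (simp add: distrib_left mult.assoc[symmetric] e1 e2)
      qed
      have "s * (\<mu> * log 2 y1 + (1 - \<mu>) * log 2 y2) \<le> s * log 2 (\<mu> * y1 + (1 - \<mu>) * y2)"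
        using conc sp by simp
      also have "\<dots> = phi c s (\<theta> * a1 + (1 - \<theta>) * a2)"
        using sp comb by (simp add: phi_def)
      finally show ?thesis using lhs s_def by simp
    qed
  qed
qed


lemma telescope:
  fixes L :: "nat \<Rightarrow> real" and n :: nat
  shows "(\<Sum>i=1..n. (L (i - 1) - L i)) = L 0 - L n"
  by (induction n) auto

lemma slot_eq:
  assumes d: "d \<in> box_set K T" and t: "t \<in> {1..T}" and c: "c > 0"
    and g: "\<forall>i\<in>{1..K}. \<forall>t\<in>{1..T}. g i t > 0"
  shows "slot_term K g c d t = phi c (1 - fst d t) (\<Sum>j=1..K. g j t * snd d j t)"
proof (cases "fst d t = 1")
  case True
  then show ?thesis by (simp add: slot_term_def phi_def)
next
  case False
  have tau: "0 \<le> fst d t" "fst d t \<le> 1" using d t by (auto simp: box_set_def)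
  define s where "s = 1 - fst d t"
  have sp: "s > 0" using False tau s_def by simp
  define I where "I i = interf K g c d i t" for i
  have nn: "\<And>j. j \<in> {1..K} \<Longrightarrow> 0 \<le> g j t * snd d j t"
  proof -
    fix j assume j: "j \<in> {1..K}"
    have "0 < g j t" "0 \<le> snd d j t" using d t g j by (auto simp: box_set_def)
    thus "0 \<le> g j t * snd d j t" by simp
  qed
  have Ipos: "I i > 0" for i
  proof -
    have "0 \<le> (\<Sum>j\<in>{i+1..K}. g j t * snd d j t)"
      by (intro sum_nonneg nn) auto
    moreover have "c * s > 0" using c sp by simp
    ultimately show ?thesis unfolding I_def interf_def s_def by simp
  qed
  have Istep: "I (i - 1) = I i + g i t * snd d i t" if "i \<in> {1..K}" for i
  proof -
    have "Suc (i - 1) = i" using that by auto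
    moreover have "(\<Sum>j\<in>{i..K}. g j t * snd d j t) = g i t * snd d i t + (\<Sum>j\<in>{Suc i..K}. g j t * snd d j t)"
      using that by (intro sum.atLeast_Suc_atMost) auto
    ultimately show ?thesis unfolding I_def interf_def by simp
  qed
  have tm: "log 2 (1 + sinr K g c d i t) = log 2 (I (i - 1)) - log 2 (I i)"
    if "i \<in> {1..K}" for i
  proof -
    have "1 + sinr K g c d i t = I (i - 1) / I i"
      unfolding sinr_def Istep[OF that] using Ipos[of i] by (simp add: I_def field_simps)
    thus ?thesis using Ipos[of i] Ipos[of "i - 1"] by (simp add: log_divide)
  qed
  have "(\<Sum>i=1..K. log 2 (1 + sinr K g c d i t)) = (\<Sum>i=1..K. log 2 (I (i - 1)) - log 2 (I i))"
    by (intro sum.cong refl tm) auto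
  also have "\<dots> = log 2 (I 0) - log 2 (I K)" by (rule telescope)
  also have "\<dots> = log 2 (I 0 / I K)" using Ipos[of 0] Ipos[of K] by (simp add: log_divide)
  also have "I 0 / I K = 1 + (\<Sum>j=1..K. g j t * snd d j t) / (c * s)"
    unfolding I_def interf_def s_def using c sp s_def by (simp add: field_simps)
  finally have "(\<Sum>i=1..K. log 2 (1 + sinr K g c d i t)) = log 2 (1 + (\<Sum>j=1..K. g j t * snd d j t) / (c * s))" .
  thus ?thesis using False sp unfolding slot_term_def phi_def s_def
    by (simp add: sum_distrib_left[symmetric])
qed

lemma mix_box:
  assumes "u \<in> box_set K T" "v \<in> box_set K T" "0 \<le> \<theta>" "\<theta> \<le> 1"
  shows "mix \<theta> u v \<in> box_set K T"
  using assms unfolding box_set_def mix_def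
  by (auto intro!: add_nonneg_nonneg mult_nonneg_nonneg convex_bound_le)

theorem theorem1:
  fixes K T :: nat and g \<gamma> :: "nat \<Rightarrow> nat \<Rightarrow> real" and \<sigma>2 :: real and S :: "nat \<Rightarrow> real"
  assumes g_pos: "\<forall>i\<in>{1..K}. \<forall>t\<in>{1..T}. g i t > 0"
    and sigma_pos: "\<sigma>2 > 0"
    and gamma_pos: "\<forall>i\<in>{1..K}. \<forall>t\<in>{1..T}. \<gamma> i t > 0"
  shows "concave_dec (box_set K T) (objective K T g \<sigma>2)
         \<and> convex_dec (feasible_set K T g \<sigma>2 \<gamma> S)"
proof
  show "concave_dec (box_set K T) (objective K T g \<sigma>2)"
    unfolding concave_dec_def
  proof (intro ballI allI impI)
    fix u v and \<theta> :: real assume u: "u \<in> box_set K T" and v: "v \<in> box_set K T" and th: "0 \<le> \<theta> \<and> \<theta> \<le> 1"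
    have m: "mix \<theta> u v \<in> box_set K T" using mix_box u v th by auto
    define A where "A (d::decision) t = (\<Sum>j=1..K. g j t * snd d j t)" for d t
    have Anonneg: "A d t \<ge> 0" if "d \<in> box_set K T" "t \<in> {1..T}" for d t
      unfolding A_def
    proof (rule sum_nonneg)
      fix j assume j: "j \<in> {1..K}"
      have "0 < g j t" "0 \<le> snd d j t" using that g_pos j by (auto simp: box_set_def)
      thus "0 \<le> g j t * snd d j t" by simp
    qed
    have Amix: "A (mix \<theta> u v) t = \<theta> * A u t + (1 - \<theta>) * A v t" for t
      unfolding A_def mix_def by (simp add: sum_distrib_left sum.distrib[symmetric] algebra_simps)
    have smix: "1 - fst (mix \<theta> u v) t = \<theta> * (1 - fst u t) + (1 - \<theta>) * (1 - fst v t)" for t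
      unfolding mix_def by (simp add: algebra_simps)
    have "\<theta> * objective K T g \<sigma>2 u + (1 - \<theta>) * objective K T g \<sigma>2 v
        = (\<Sum>t=1..T. \<theta> * phi \<sigma>2 (1 - fst u t) (A u t) + (1 - \<theta>) * phi \<sigma>2 (1 - fst v t) (A v t))"
      unfolding objective_def sum_distrib_left sum.distrib
      using slot_eq[OF u _ sigma_pos g_pos] slot_eq[OF v _ sigma_pos g_pos]
      by (simp add: A_def)
    also have "\<dots> \<le> (\<Sum>t=1..T. phi \<sigma>2 (1 - fst (mix \<theta> u v) t) (A (mix \<theta> u v) t))"
    proof (rule sum_mono)
      fix t assume t: "t \<in> {1..T}"
      have "0 \<le> 1 - fst u t" "0 \<le> 1 - fst v t" using u v t by (auto simp: box_set_def)
      thus "\<theta> * phi \<sigma>2 (1 - fst u t) (A u t) + (1 - \<theta>) * phi \<sigma>2 (1 - fst v t) (A v t)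
            \<le> phi \<sigma>2 (1 - fst (mix \<theta> u v) t) (A (mix \<theta> u v) t)"
        unfolding Amix smix using phi_concave[OF sigma_pos _ _ Anonneg[OF u t] Anonneg[OF v t]] th
        by auto
    qed
    also have "\<dots> = objective K T g \<sigma>2 (mix \<theta> u v)"
      unfolding objective_def using slot_eq[OF m _ sigma_pos g_pos]
      by (simp add: A_def)
    finally show "\<theta> * objective K T g \<sigma>2 u + (1 - \<theta>) * objective K T g \<sigma>2 v
        \<le> objective K T g \<sigma>2 (mix \<theta> u v)" .
  qed
next
  show "convex_dec (feasible_set K T g \<sigma>2 \<gamma> S)"
    unfolding convex_dec_def
  proof (intro ballI allI impI)
    fix u v and \<theta> :: real assume u: "u \<in> feasible_set K T g \<sigma>2 \<gamma> S" and v: "v \<in> feasible_set K T g \<sigma>2 \<gamma> S"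
      and th: "0 \<le> \<theta> \<and> \<theta> \<le> 1"
    let ?m = "mix \<theta> u v"
    have Imix: "interf K g \<sigma>2 ?m i t = \<theta> * interf K g \<sigma>2 u i t + (1 - \<theta>) * interf K g \<sigma>2 v i t" for i t
      unfolding interf_def mix_def by (simp add: sum_distrib_left sum.distrib[symmetric] algebra_simps)
    have c1: "(\<Sum>n=1..t. snd ?m i n) \<le> (\<Sum>n=1..t. \<gamma> i n * fst ?m n)"
      if "i \<in> {1..K}" "t \<in> {1..T}" for i t
    proof -
      have a: "(\<Sum>n=1..t. snd u i n) \<le> (\<Sum>n=1..t. \<gamma> i n * fst u n)"
        "(\<Sum>n=1..t. snd v i n) \<le> (\<Sum>n=1..t. \<gamma> i n * fst v n)"
        using u v that by (auto simp: feasible_set_def)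
      have "(\<Sum>n=1..t. snd ?m i n) = \<theta> * (\<Sum>n=1..t. snd u i n) + (1 - \<theta>) * (\<Sum>n=1..t. snd v i n)"
        unfolding mix_def by (simp add: sum_distrib_left sum.distrib)
      also have "\<dots> \<le> \<theta> * (\<Sum>n=1..t. \<gamma> i n * fst u n) + (1 - \<theta>) * (\<Sum>n=1..t. \<gamma> i n * fst v n)"
        using a th by (intro add_mono mult_left_mono) auto
      also have "\<dots> = (\<Sum>n=1..t. \<gamma> i n * fst ?m n)"
        unfolding mix_def by (simp add: sum_distrib_left sum.distrib[symmetric] algebra_simps)
      finally show ?thesis .
    qed
    have c2: "g i t * snd ?m i t \<ge> S i * interf K g \<sigma>2 ?m i t"
      if "i \<in> {1..K}" "t \<in> {1..T}" for i t
    proof -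
      have a: "g i t * snd u i t \<ge> S i * interf K g \<sigma>2 u i t"
        "g i t * snd v i t \<ge> S i * interf K g \<sigma>2 v i t"
        using u v that by (auto simp: feasible_set_def)
      have "S i * interf K g \<sigma>2 ?m i t = \<theta> * (S i * interf K g \<sigma>2 u i t) + (1 - \<theta>) * (S i * interf K g \<sigma>2 v i t)"
        unfolding Imix by (simp add: algebra_simps)
      also have "\<dots> \<le> \<theta> * (g i t * snd u i t) + (1 - \<theta>) * (g i t * snd v i t)"
        using a th by (intro add_mono mult_left_mono) auto
      also have "\<dots> = g i t * snd ?m i t"
        unfolding mix_def by (simp add: algebra_simps)
      finally show ?thesis .
    qed
    have c34: "?m \<in> box_set K T"
      using u v th by (intro mix_box) (auto simp: feasible_set_def box_set_def)
    show "?m \<in> feasible_set K T g \<sigma>2 \<gamma> S"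
      using c1 c2 c34 unfolding feasible_set_def box_set_def by blast
  qed
qed

end
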